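(* Let $\mathcal{A}=(Q,\Sigma,q_I,\delta,\Omega,\mathrm{Cst})$ be a parity automaton with costs. Let $(\rho_j^1)_{j\in\mathbb{N}}$ and $(\rho_j^2)_{j\in\mathbb{N}}$ be sequences of non-empty finite runs of $\mathcal{A}$ such that, for every $j$, $\rho_j^1$ and $\rho_j^2$ have the same type, and such that $\sup_j |\rho_j^2| = d<\infty$ (where $|\rho|$ is the number of transitions of $\rho$). Suppose that $\rho'=\rho_0^1\rho_1^1\rho_2^1\cdots$ is an infinite run (i.e., each $\rho_j^1$ ends in the state in which $\rho_{j+1}^1$ starts), and let $\rho''=\rho_0^2\rho_1^2\rho_2^2\cdots$. If $\limsup_{n\to\infty}\mathrm{Cor}(\rho',n)\le b$ for some $b\in\mathbb{N}$, then $\limsup_{n\to\infty}\mathrm{Cor}(\rho'',n)\le (b+2)\cdot d$. In particular, if $\rho'$ is accepting, then $\rho''$ is accepting as well.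
   Context: A parity automaton with costs is a tuple $\mathcal{A}=(Q,\Sigma,q_I,\delta,\Omega,\mathrm{Cst})$ with a finite set $Q$ of states, a finite alphabet $\Sigma$, an initial state $q_I\in Q$, a deterministic complete transition function $\delta\colon Q\times\Sigma\to Q$ (also viewed as the set of transitions $(q,a,\delta(q,a))$), a coloring $\Omega\colon Q\to\mathbb{N}$, and a cost function $\mathrm{Cst}$ assigning to every transition either $\epsilon$ or $\mathtt{i}$ (the latter are called increment-transitions). Throughout, $\Omega(Q)$ contains both an even and an odd color. A run from $q_0$ on $a_0a_1\cdots$ is the sequence of transitions $(q_0,a_0,q_1)(q_1,a_1,q_2)\cdots$ with $q_{j+1}=\delta(q_j,a_j)$; the cost of a finite run is its number of increment-transitions. For odd $c$, let $\mathrm{Ans}(c)=\{c'\in\Omega(Q)\mid c'>c,\ c'\text{ even}\}$. For an infinite run $\rho=(q_0,a_0,q_1)(q_1,a_1,q_2)\cdots$ and $n\in\mathbb{N}$, $\mathrm{Cor}(\rho,n)=0$ if $\Omega(q_n)$ is even, and otherwise $\mathrm{Cor}(\rho,n)$ is the minimum of the costs of $(q_n,a_n,q_{n+1})\cdots(q_{n'-1},a_{n'-1},q_{n'})$ over all $n'>n$ with $\Omega(q_{n'})\in\mathrm{Ans}(\Omega(q_n))$, with $\min\emptyset=\infty$. An infinite run $\rho$ is accepting if $\limsup_{n\to\infty}\mathrm{Cor}(\rho,n)<\infty$. The type of a non-empty finite run $(q_0,a_0,q_1)\cdots(q_{n-1},a_{n-1},q_n)$ is the tuple $(q_0,q_n,c_0,c_1,\ell)$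 where (with $\max\emptyset=\bot$) $c_0=\max\{\Omega(q_j)\mid 0\le j\le n,\ \Omega(q_j)\text{ even}\}$, $c_1=\max\{\Omega(q_j)\mid 0\le j\le n,\ \Omega(q_j)\text{ odd},\ \Omega(q_{j'})\notin\mathrm{Ans}(\Omega(q_j))\text{ for all }j<j'\le n\}$ (the maximal unanswered request), and $\ell=\mathtt{i}$ iff the run contains an increment-transition, $\ell=\epsilon$ otherwise. *)

theory Defs
  imports Main "HOL-Library.Extended_Nat" "HOL-Library.Liminf_Limsup"
begin

text \<open>States are a finite type 'q, letters a finite
 type 'a; the deterministic complete transition function is delta, colouring Omega,
 and Cst assigns a cost (Eps or Inc) to each transition (q, a, delta q a).\<close>

datatype cost = Eps | Inc

type_synonym ('q,'a) trans = "'q \<times> 'a \<times> 'q"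

definition src :: "('q,'a) trans \<Rightarrow> 'q" where "src t = fst t"
definition tgt :: "('q,'a) trans \<Rightarrow> 'q" where "tgt t = snd (snd t)"
definition lbl :: "('q,'a) trans \<Rightarrow> 'a" where "lbl t = fst (snd t)"

definition is_trans :: "('q \<Rightarrow> 'a \<Rightarrow> 'q) \<Rightarrow> ('q,'a) trans \<Rightarrow> bool" where
  "is_trans delta t \<longleftrightarrow> tgt t = delta (src t) (lbl t)"

definition is_incr :: "('q \<Rightarrow> 'a \<Rightarrow> cost) \<Rightarrow> ('q,'a) trans \<Rightarrow> bool" where
  "is_incr Cst t \<longleftrightarrow> Cst (src t) (lbl t) = Inc"

definition colours_ok :: "('q \<Rightarrow> nat) \<Rightarrow> bool" where
  "colours_ok Omega \<longleftrightarrow> (\<exists>q. even (Omega q)) \<and> (\<exists>q. odd (Omega q))"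

definition is_fin_run :: "('q \<Rightarrow> 'a \<Rightarrow> 'q) \<Rightarrow> ('q,'a) trans list \<Rightarrow> bool" where
  "is_fin_run delta ts \<longleftrightarrow> ts \<noteq> [] \<and> (\<forall>t\<in>set ts. is_trans delta t) \<and>
     (\<forall>i. Suc i < length ts \<longrightarrow> tgt (ts ! i) = src (ts ! Suc i))"

definition is_inf_run :: "('q \<Rightarrow> 'a \<Rightarrow> 'q) \<Rightarrow> (nat \<Rightarrow> ('q,'a) trans) \<Rightarrow> bool" where
  "is_inf_run delta r \<longleftrightarrow> (\<forall>n. is_trans delta (r n)) \<and> (\<forall>n. tgt (r n) = src (r (Suc n)))"

definition start_pos :: "(nat \<Rightarrow> 'b list) \<Rightarrow> nat \<Rightarrow> nat" where
  "start_pos xs j = (\<Sum>i<j. length (xs i))"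

definition concat_inf :: "(nat \<Rightarrow> 'b list) \<Rightarrow> nat \<Rightarrow> 'b" where
  "concat_inf xs n = (let j = (LEAST j. n < start_pos xs (Suc j)) in xs j ! (n - start_pos xs j))"

definition Ans :: "('q \<Rightarrow> nat) \<Rightarrow> nat \<Rightarrow> nat set" where
  "Ans Omega c = {c'. c' \<in> range Omega \<and> c' > c \<and> even c'}"

definition st :: "(nat \<Rightarrow> ('q,'a) trans) \<Rightarrow> nat \<Rightarrow> 'q" where
  "st r n = src (r n)"

definition seg_cost :: "('q \<Rightarrow> 'a \<Rightarrow> cost) \<Rightarrow> (nat \<Rightarrow> ('q,'a) trans) \<Rightarrow> nat \<Rightarrow> nat \<Rightarrow> nat" where
  "seg_cost Cst r n n' = card {k. n \<le> k \<and> k < n' \<and> is_incr Cst (r k)}"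

definition Cor :: "('q \<Rightarrow> nat) \<Rightarrow> ('q \<Rightarrow> 'a \<Rightarrow> cost) \<Rightarrow> (nat \<Rightarrow> ('q,'a) trans) \<Rightarrow> nat \<Rightarrow> enat" where
  "Cor Omega Cst r n =
     (if even (Omega (st r n)) then 0
      else Inf {enat (seg_cost Cst r n n') | n'. n' > n \<and> Omega (st r n') \<in> Ans Omega (Omega (st r n))})"

definition accepting :: "('q \<Rightarrow> nat) \<Rightarrow> ('q \<Rightarrow> 'a \<Rightarrow> cost) \<Rightarrow> (nat \<Rightarrow> ('q,'a) trans) \<Rightarrow> bool" where
  "accepting Omega Cst r \<longleftrightarrow> limsup (Cor Omega Cst r) < \<infinity>"

text \<open>Types of non-empty finite runs; None plays the role of bottom.\<close>
definition fstates :: "('q,'a) trans list \<Rightarrow> 'q list" where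
  "fstates ts = src (hd ts) # map tgt ts"

definition max_opt :: "nat set \<Rightarrow> nat option" where
  "max_opt S = (if S = {} then None else Some (Max S))"

definition run_type :: "('q \<Rightarrow> nat) \<Rightarrow> ('q \<Rightarrow> 'a \<Rightarrow> cost) \<Rightarrow> ('q,'a) trans list
    \<Rightarrow> 'q \<times> 'q \<times> nat option \<times> nat option \<times> cost" where
  "run_type Omega Cst ts =
    (let qs = fstates ts; n = length ts in
     (qs ! 0, qs ! n,
      max_opt {Omega (qs ! j) | j. j \<le> n \<and> even (Omega (qs ! j))},
      max_opt {Omega (qs ! j) | j. j \<le> n \<and> odd (Omega (qs ! j)) \<and>
                 (\<forall>j'. j < j' \<and> j' \<le> n \<longrightarrow> Omega (qs ! j') \<notin> Ans Omega (Omega (qs ! j)))},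
      (if \<exists>t\<in>set ts. is_incr Cst t then Inc else Eps)))"

end

theory Submission
  imports Defs
begin

lemma sp_Suc: "start_pos xs (Suc j) = start_pos xs j + length (xs j)"
  by (simp add: start_pos_def)

lemma sp_mono: "a \<le> b \<Longrightarrow> start_pos xs a \<le> start_pos xs b"
  by (induction b) (auto simp: sp_Suc le_Suc_eq)

lemma sp_strict:
  assumes "\<forall>j. xs j \<noteq> []" "a < b" shows "start_pos xs a < start_pos xs b"
  using assms(2)
proof (induction b)
  case 0 then show ?case by simp
next
  case (Suc b)
  have "length (xs b) > 0" using assms(1) by simp
  then show ?case using Suc sp_mono[of a b xs] by (auto simp: sp_Suc less_Suc_eq)
qed

lemma sp_ge: "\<forall>j. xs j \<noteq> [] \<Longrightarrow> j \<le> start_pos xs j"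
proof (induction j)
  case 0 then show ?case by simp
next
  case (Suc j)
  then have "length (xs j) > 0" by simp
  then show ?case using Suc by (simp add: sp_Suc del: length_greater_0_conv)
qed

lemma concat_at:
  assumes "i < length (xs j)"
  shows "concat_inf xs (start_pos xs j + i) = xs j ! i"
proof -
  have "(LEAST j0. start_pos xs j + i < start_pos xs (Suc j0)) = j"
  proof (rule Least_equality)
    show "start_pos xs j + i < start_pos xs (Suc j)" using assms by (simp add: sp_Suc)
  next
    fix y assume "start_pos xs j + i < start_pos xs (Suc y)"
    then show "j \<le> y" using sp_mono[of "Suc y" j xs] by (cases "j \<le> y") auto
  qed
  then show ?thesis by (simp add: concat_inf_def)
qed

lemma decomp:
  assumes "\<forall>j. xs j \<noteq> []"
  shows "\<exists>j i. i < length (xs j) \<and> n = start_pos xs j + i"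
proof -
  define j where "j = (LEAST j. n < start_pos xs (Suc j))"
  have ex: "n < start_pos xs (Suc n)" using sp_ge[OF assms, of "Suc n"] by simp
  have 1: "n < start_pos xs (Suc j)" unfolding j_def by (rule LeastI, rule ex)
  have 2: "start_pos xs j \<le> n"
  proof (cases j)
    case 0 then show ?thesis by (simp add: start_pos_def)
  next
    case (Suc j0)
    have "\<not> n < start_pos xs (Suc j0)"
    proof
      assume "n < start_pos xs (Suc j0)"
      then have "j \<le> j0" unfolding j_def by (rule Least_le)
      then show False using Suc by simp
    qed
    then show ?thesis using Suc by simp
  qed
  show ?thesis using 1 2 by (intro exI[of _ j] exI[of _ "n - start_pos xs j"]) (auto simp: sp_Suc)
qed

lemma fstates_lt:
  assumes "is_fin_run delta ts" "i < length ts"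
  shows "fstates ts ! i = src (ts ! i)"
proof (cases i)
  case 0 then show ?thesis using assms by (cases ts) (auto simp: fstates_def is_fin_run_def)
next
  case (Suc k)
  then have "fstates ts ! i = tgt (ts ! k)" using assms by (simp add: fstates_def)
  also have "\<dots> = src (ts ! i)" using assms Suc unfolding is_fin_run_def by auto
  finally show ?thesis .
qed

lemma fstates_len:
  assumes "ts \<noteq> []"
  shows "fstates ts ! length ts = tgt (ts ! (length ts - 1))"
  using assms by (cases ts) (auto simp: fstates_def nth_Cons split: nat.splits)

lemma st_block:
  assumes "\<forall>j. is_fin_run delta (xs j)"
    and "\<forall>j. fstates (xs j) ! length (xs j) = fstates (xs (Suc j)) ! 0"
    and "i \<le> length (xs j)"
  shows "st (concat_inf xs) (start_pos xs j + i) = fstates (xs j) ! i"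
proof (cases "i < length (xs j)")
  case True
  then show ?thesis using concat_at[of i xs j, OF True] fstates_lt[OF assms(1)[rule_format] True]
    by (simp add: st_def)
next
  case False
  then have i: "i = length (xs j)" using assms(3) by simp
  have ne: "xs (Suc j) \<noteq> []" using assms(1) by (simp add: is_fin_run_def)
  have "st (concat_inf xs) (start_pos xs j + i) = st (concat_inf xs) (start_pos xs (Suc j) + 0)"
    using i by (simp add: sp_Suc)
  also have "\<dots> = src (xs (Suc j) ! 0)" using concat_at[of 0 xs "Suc j"] ne by (simp add: st_def)
  also have "\<dots> = fstates (xs (Suc j)) ! 0" using fstates_lt[OF assms(1)[rule_format], of 0 "Suc j"] ne by simp
  finally show ?thesis using assms(2) i by simp
qed

definition incb :: "('q \<Rightarrow> 'a \<Rightarrow> cost) \<Rightarrow> ('q,'a) trans list \<Rightarrow> bool" where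
  "incb Cst ts \<longleftrightarrow> (\<exists>t\<in>set ts. is_incr Cst t)"

lemma block_of:
  assumes "\<forall>j. xs j \<noteq> []" "i < length (xs m)" "start_pos xs j \<le> start_pos xs m + i"
  shows "j \<le> m"
proof (rule ccontr)
  assume "\<not> j \<le> m"
  then have "Suc m \<le> j" by simp
  then have "start_pos xs (Suc m) \<le> start_pos xs j" by (rule sp_mono)
  then show False using assms by (simp add: sp_Suc)
qed

lemma block_of2:
  assumes "\<forall>j. xs j \<noteq> []" "start_pos xs m + i < start_pos xs (Suc j')"
  shows "m \<le> j'"
proof (rule ccontr)
  assume "\<not> m \<le> j'"
  then have "Suc j' \<le> m" by simp
  then have "start_pos xs (Suc j') \<le> start_pos xs m" by (rule sp_mono)
  then show False using assms by simp
qed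

lemma cost_upper:
  assumes ne: "\<forall>j. xs j \<noteq> []" and dl: "\<forall>j. length (xs j) \<le> d"
    and "start_pos xs j \<le> n" "n' \<le> start_pos xs (Suc j')"
  shows "seg_cost Cst (concat_inf xs) n n' \<le> d * card {m. j \<le> m \<and> m \<le> j' \<and> incb Cst (xs m)}"
proof -
  define M where "M = {m. j \<le> m \<and> m \<le> j' \<and> incb Cst (xs m)}"
  have fM: "finite M" unfolding M_def by (rule finite_subset[of _ "{..j'}"]) auto
  have sub: "{k. n \<le> k \<and> k < n' \<and> is_incr Cst (concat_inf xs k)}
      \<subseteq> (\<Union>m\<in>M. {start_pos xs m ..< start_pos xs (Suc m)})"
  proof
    fix k assume k: "k \<in> {k. n \<le> k \<and> k < n' \<and> is_incr Cst (concat_inf xs k)}"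
    obtain m i where mi: "i < length (xs m)" "k = start_pos xs m + i" using decomp[OF ne] by blast
    have "j \<le> m" using block_of[OF ne mi(1)] k mi assms(3) by simp
    moreover have "m \<le> j'" using block_of2[OF ne, of m i j'] k mi assms(4) by simp
    moreover have "incb Cst (xs m)" using k mi concat_at[of i xs m] unfolding incb_def
      by (auto intro: nth_mem)
    ultimately have "m \<in> M" unfolding M_def by simp
    then show "k \<in> (\<Union>m\<in>M. {start_pos xs m ..< start_pos xs (Suc m)})"
      using mi by (intro UN_I[of m]) (auto simp: sp_Suc)
  qed
  have "seg_cost Cst (concat_inf xs) n n' \<le> card (\<Union>m\<in>M. {start_pos xs m ..< start_pos xs (Suc m)})"
    unfolding seg_cost_def using sub fM by (intro card_mono) auto
  also have "\<dots> \<le> (\<Sum>m\<in>M. card {start_pos xs m ..< start_pos xs (Suc m)})"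
    by (rule card_UN_le[OF fM])
  also have "\<dots> \<le> (\<Sum>m\<in>M. d)" using dl by (intro sum_mono) (simp add: sp_Suc)
  also have "\<dots> = d * card M" by simp
  finally show ?thesis unfolding M_def .
qed

lemma cost_lower:
  assumes ne: "\<forall>j. xs j \<noteq> []"
    and "P \<le> start_pos xs (Suc j)" "start_pos xs j' \<le> P'"
  shows "card {m. j < m \<and> m < j' \<and> incb Cst (xs m)} \<le> seg_cost Cst (concat_inf xs) P P'"
proof -
  define M where "M = {m. j < m \<and> m < j' \<and> incb Cst (xs m)}"
  have "\<forall>m\<in>M. \<exists>i. i < length (xs m) \<and> is_incr Cst (xs m ! i)"
    unfolding M_def incb_def by (auto simp: in_set_conv_nth) metis
  then obtain ii where ii: "\<And>m. m \<in> M \<Longrightarrow> ii m < length (xs m) \<and> is_incr Cst (xs m ! ii m)"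
    by metis
  define f where "f m = start_pos xs m + ii m" for m
  have inj: "inj_on f M"
  proof (rule inj_onI)
    fix m1 m2 assume a: "m1 \<in> M" "m2 \<in> M" "f m1 = f m2"
    show "m1 = m2"
    proof (rule ccontr)
      assume "m1 \<noteq> m2"
      then consider "m1 < m2" | "m2 < m1" by linarith
      then show False
      proof cases
        case 1
        then have "start_pos xs (Suc m1) \<le> start_pos xs m2" by (intro sp_mono) simp
        then show False using a ii[of m1] unfolding f_def by (simp add: sp_Suc)
      next
        case 2
        then have "start_pos xs (Suc m2) \<le> start_pos xs m1" by (intro sp_mono) simp
        then show False using a ii[of m2] unfolding f_def by (simp add: sp_Suc)
      qed
    qed
  qed
  have img: "f ` M \<subseteq> {k. P \<le> k \<and> k < P' \<and> is_incr Cst (concat_inf xs k)}"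
  proof
    fix k assume "k \<in> f ` M"
    then obtain m where m: "m \<in> M" "k = f m" by blast
    have "start_pos xs (Suc j) \<le> start_pos xs m" using m(1) unfolding M_def by (intro sp_mono) simp
    moreover have "start_pos xs (Suc m) \<le> start_pos xs j'" using m(1) unfolding M_def by (intro sp_mono) simp
    moreover have "concat_inf xs k = xs m ! ii m" using m ii[of m] concat_at[of "ii m" xs m] f_def by simp
    ultimately show "k \<in> {k. P \<le> k \<and> k < P' \<and> is_incr Cst (concat_inf xs k)}"
      using m ii[of m] assms(2,3) unfolding f_def by (auto simp: sp_Suc)
  qed
  have fin: "finite {k. P \<le> k \<and> k < P' \<and> is_incr Cst (concat_inf xs k)}"
    by (rule finite_subset[of _ "{..<P'}"]) auto
  have "card M \<le> card {k. P \<le> k \<and> k < P' \<and> is_incr Cst (concat_inf xs k)}"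
    using card_inj_on_le[OF inj img fin] .
  then show ?thesis unfolding M_def seg_cost_def .
qed

lemma max_opt_match:
  fixes A B :: "nat set"
  assumes "finite A" "finite B" "max_opt A = max_opt B" "x \<in> A"
  shows "\<exists>y\<in>B. x \<le> y"
proof -
  have "A \<noteq> {}" using assms by auto
  then have "B \<noteq> {}" and eq: "Max A = Max B" using assms(3) unfolding max_opt_def by (auto split: if_splits)
  moreover have "x \<le> Max A" using assms by (intro Max_ge)
  ultimately show ?thesis using assms eq by (intro bexI[of _ "Max B"]) auto
qed

definition evs :: "('q \<Rightarrow> nat) \<Rightarrow> ('q,'a) trans list \<Rightarrow> nat set" where
  "evs Omega ts = {Omega (fstates ts ! j) | j. j \<le> length ts \<and> even (Omega (fstates ts ! j))}"

definition uns :: "('q \<Rightarrow> nat) \<Rightarrow> ('q,'a) trans list \<Rightarrow> nat set" where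
  "uns Omega ts = {Omega (fstates ts ! j) | j. j \<le> length ts \<and> odd (Omega (fstates ts ! j)) \<and>
                 (\<forall>j'. j < j' \<and> j' \<le> length ts \<longrightarrow> Omega (fstates ts ! j') \<notin> Ans Omega (Omega (fstates ts ! j)))}"

lemma run_type_unf:
  "run_type Omega Cst ts = (fstates ts ! 0, fstates ts ! length ts, max_opt (evs Omega ts),
      max_opt (uns Omega ts), if incb Cst ts then Inc else Eps)"
  by (simp add: run_type_def Let_def evs_def uns_def incb_def)

lemma card_ends:
  "card {m::nat. j \<le> m \<and> m \<le> j' \<and> Q m} \<le> card {m. j < m \<and> m < j' \<and> Q m} + 2"
proof -
  define X where "X = {m. j < m \<and> m < j' \<and> Q m}"
  have fX: "finite X" unfolding X_def by (rule finite_subset[of _ "{..<j'}"]) auto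
  have "{m::nat. j \<le> m \<and> m \<le> j' \<and> Q m} \<subseteq> insert j (insert j' X)" unfolding X_def by auto
  then have "card {m::nat. j \<le> m \<and> m \<le> j' \<and> Q m} \<le> card (insert j (insert j' X))"
    using fX by (intro card_mono) auto
  also have "\<dots> \<le> card X + 2" using fX by (simp add: card_insert_if)
  finally show ?thesis unfolding X_def .
qed

lemma core:
  fixes delta :: "'q::finite \<Rightarrow> 'a::finite \<Rightarrow> 'q"
    and Omega :: "'q \<Rightarrow> nat"
    and Cst :: "'q \<Rightarrow> 'a \<Rightarrow> cost"
    and r1 r2 :: "nat \<Rightarrow> ('q,'a) trans list"
    and d b N :: nat
  assumes fr1: "\<forall>j. is_fin_run delta (r1 j)"
    and fr2: "\<forall>j. is_fin_run delta (r2 j)"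
    and ty: "\<forall>j. run_type Omega Cst (r1 j) = run_type Omega Cst (r2 j)"
    and dl: "\<forall>j. length (r2 j) \<le> d"
    and inf: "is_inf_run delta (concat_inf r1)"
    and ev: "\<forall>m\<ge>N. Cor Omega Cst (concat_inf r1) m \<le> enat b"
    and nN: "start_pos r2 N \<le> n"
  shows "Cor Omega Cst (concat_inf r2) n \<le> enat ((b + 2) * d)"
proof -
  define R1 where "R1 = concat_inf r1"
  define R2 where "R2 = concat_inf r2"
  have ne1: "\<forall>j. r1 j \<noteq> []" using fr1 by (simp add: is_fin_run_def)
  have ne2: "\<forall>j. r2 j \<noteq> []" using fr2 by (simp add: is_fin_run_def)
  have t0: "fstates (r1 j) ! 0 = fstates (r2 j) ! 0" for j using ty[rule_format, of j] by (simp add: run_type_unf)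
  have tL: "fstates (r1 j) ! length (r1 j) = fstates (r2 j) ! length (r2 j)" for j
    using ty[rule_format, of j] by (simp add: run_type_unf)
  have tE: "max_opt (evs Omega (r1 j)) = max_opt (evs Omega (r2 j))" for j
    using ty[rule_format, of j] by (simp add: run_type_unf)
  have tU: "max_opt (uns Omega (r1 j)) = max_opt (uns Omega (r2 j))" for j
    using ty[rule_format, of j] by (simp add: run_type_unf)
  have tI: "incb Cst (r1 j) = incb Cst (r2 j)" for j
    using ty[rule_format, of j] by (simp add: run_type_unf split: if_splits)
  have finR: "finite (range Omega)" by simp
  have fE: "finite (evs Omega ts)" for ts :: "('q,'a) trans list" by (rule finite_subset[OF _ finR]) (auto simp: evs_def)
  have fU: "finite (uns Omega ts)" for ts :: "('q,'a) trans list" by (rule finite_subset[OF _ finR]) (auto simp: uns_def)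
  have lnk1: "\<forall>j. fstates (r1 j) ! length (r1 j) = fstates (r1 (Suc j)) ! 0"
  proof
    fix j
    define L where "L = length (r1 j)"
    have L: "L > 0" using ne1 L_def by simp
    have a: "R1 (start_pos r1 j + (L - 1)) = r1 j ! (L - 1)" using L concat_at[of "L-1" r1 j] L_def R1_def by simp
    have "Suc (start_pos r1 j + (L - 1)) = start_pos r1 (Suc j) + 0" using L L_def by (simp add: sp_Suc)
    then have b: "R1 (Suc (start_pos r1 j + (L - 1))) = r1 (Suc j) ! 0"
      using concat_at[of 0 r1 "Suc j"] ne1 R1_def by simp
    have "tgt (R1 (start_pos r1 j + (L - 1))) = src (R1 (Suc (start_pos r1 j + (L - 1))))"
      using inf R1_def by (simp add: is_inf_run_def)
    then have "tgt (r1 j ! (L - 1)) = src (r1 (Suc j) ! 0)" using a b by simp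
    then show "fstates (r1 j) ! length (r1 j) = fstates (r1 (Suc j)) ! 0"
      using fstates_len[of "r1 j"] fstates_lt[OF fr1[rule_format], of 0 "Suc j"] ne1 L_def by simp
  qed
  have lnk2: "\<forall>j. fstates (r2 j) ! length (r2 j) = fstates (r2 (Suc j)) ! 0"
    using lnk1 t0 tL by metis
  have st1: "st R1 (start_pos r1 j + i) = fstates (r1 j) ! i" if "i \<le> length (r1 j)" for i j
    using st_block[OF fr1 lnk1 that] R1_def by simp
  have st2: "st R2 (start_pos r2 j + i) = fstates (r2 j) ! i" if "i \<le> length (r2 j)" for i j
    using st_block[OF fr2 lnk2 that] R2_def by simp
  obtain j i where ji: "i < length (r2 j)" "n = start_pos r2 j + i" using decomp[OF ne2] by blast
  have jN: "N \<le> j" using block_of[OF ne2 ji(1)] nN ji by simp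
  define c where "c = Omega (fstates (r2 j) ! i)"
  have stn: "st R2 n = fstates (r2 j) ! i" using st2[of i j] ji by simp
  show ?thesis
  proof (cases "even c")
    case True
    then show ?thesis unfolding R2_def[symmetric] Cor_def using stn c_def by simp
  next
    case odd: False
    have CorS: "Cor Omega Cst R2 n \<le> enat (seg_cost Cst R2 n n')"
      if "n < n'" "Omega (st R2 n') \<in> Ans Omega c" for n'
      unfolding Cor_def using odd stn c_def that by (auto intro!: Inf_lower)
    show ?thesis
    proof (cases "\<exists>i'. i < i' \<and> i' \<le> length (r2 j) \<and> Omega (fstates (r2 j) ! i') \<in> Ans Omega c")
      case True
      then obtain i' where i': "i < i'" "i' \<le> length (r2 j)" "Omega (fstates (r2 j) ! i') \<in> Ans Omega c" by blast
      define n' where "n' = start_pos r2 j + i'"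
      have "Cor Omega Cst R2 n \<le> enat (seg_cost Cst R2 n n')"
        using CorS[of n'] i' st2[of i' j] ji n'_def by simp
      also have "seg_cost Cst R2 n n' \<le> d * card {m. j \<le> m \<and> m \<le> j \<and> incb Cst (r2 m)}"
        unfolding R2_def using ne2 dl ji i' n'_def by (intro cost_upper) (auto simp: sp_Suc)
      also have "card {m. j \<le> m \<and> m \<le> j \<and> incb Cst (r2 m)} \<le> card {j}"
        by (intro card_mono) auto
      finally have "Cor Omega Cst R2 n \<le> enat (d * 1)" by (auto simp: mult_le_mono2)
      also have "enat (d * 1) \<le> enat ((b + 2) * d)" by simp
      finally show ?thesis unfolding R2_def .
    next
      case False
      then have "c \<in> uns Omega (r2 j)" unfolding uns_def using odd c_def ji(1) by auto
      then obtain y where y: "y \<in> uns Omega (r1 j)" "c \<le> y" using max_opt_match[OF fU fU tU[symmetric]] by blast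
      then obtain p where p: "p \<le> length (r1 j)" "y = Omega (fstates (r1 j) ! p)" "odd y"
        "\<forall>j'. p < j' \<and> j' \<le> length (r1 j) \<longrightarrow> Omega (fstates (r1 j) ! j') \<notin> Ans Omega y"
        unfolding uns_def by auto
      define P where "P = start_pos r1 j + p"
      have stP: "st R1 P = fstates (r1 j) ! p" using st1 p P_def by simp
      have "N \<le> P" using jN sp_ge[OF ne1, of j] P_def by simp
      then have "Cor Omega Cst R1 P \<le> enat b" using ev R1_def by simp
      then have "Inf {enat (seg_cost Cst R1 P n') | n'. n' > P \<and> Omega (st R1 n') \<in> Ans Omega y} < enat (Suc b)"
        unfolding Cor_def using stP p by (simp add: le_less_trans)
      then obtain P' where P': "P < P'" "Omega (st R1 P') \<in> Ans Omega y" "seg_cost Cst R1 P P' \<le> b"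
        unfolding Inf_less_iff by auto
      obtain j' i'' where ji': "i'' < length (r1 j')" "P' = start_pos r1 j' + i''" using decomp[OF ne1] by blast
      have stP': "st R1 P' = fstates (r1 j') ! i''" using st1[of i'' j'] ji' by simp
      have "j \<le> j'" using block_of[OF ne1 ji'(1), of j] P' P_def ji' by simp
      moreover have "j \<noteq> j'"
      proof
        assume "j = j'"
        then show False using p(4) P' P_def ji' stP' by auto
      qed
      ultimately have jj: "j < j'" by simp
      define e where "e = Omega (st R1 P')"
      have "e \<in> evs Omega (r1 j')" unfolding evs_def e_def stP' using ji' P'(2) e_def stP'
        by (auto simp: Ans_def intro!: exI[of _ i''])
      then obtain y2 where y2: "y2 \<in> evs Omega (r2 j')" "e \<le> y2" using max_opt_match[OF fE fE tE] by blast
      then obtain k where k: "k \<le> length (r2 j')" "y2 = Omega (fstates (r2 j') ! k)" "even y2"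
        unfolding evs_def by auto
      define n' where "n' = start_pos r2 j' + k"
      have "y2 \<in> Ans Omega c" using y2 k P'(2) y e_def unfolding Ans_def by auto
      moreover have "n < n'"
      proof -
        have "start_pos r2 (Suc j) \<le> start_pos r2 j'" using jj by (intro sp_mono) simp
        then show ?thesis using ji n'_def by (simp add: sp_Suc)
      qed
      ultimately have C1: "Cor Omega Cst R2 n \<le> enat (seg_cost Cst R2 n n')"
        using CorS[of n'] st2[of k j'] k n'_def by simp
      have C2: "seg_cost Cst R2 n n' \<le> d * card {m. j \<le> m \<and> m \<le> j' \<and> incb Cst (r2 m)}"
        unfolding R2_def using ne2 dl ji k n'_def by (intro cost_upper) (auto simp: sp_Suc)
      have C3: "{m. j \<le> m \<and> m \<le> j' \<and> incb Cst (r2 m)} = {m. j \<le> m \<and> m \<le> j' \<and> incb Cst (r1 m)}"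
        using tI by auto
      have C4: "card {m. j \<le> m \<and> m \<le> j' \<and> incb Cst (r1 m)} \<le> card {m. j < m \<and> m < j' \<and> incb Cst (r1 m)} + 2"
        by (rule card_ends)
      have C5: "card {m. j < m \<and> m < j' \<and> incb Cst (r1 m)} \<le> seg_cost Cst R1 P P'"
        unfolding R1_def using ne1 p P_def ji' by (intro cost_lower) (auto simp: sp_Suc)
      have "card {m. j \<le> m \<and> m \<le> j' \<and> incb Cst (r2 m)} \<le> b + 2"
        unfolding C3 using C4 C5 P'(3) by linarith
      then have "seg_cost Cst R2 n n' \<le> d * (b + 2)" using C2 mult_le_mono2 order_trans by blast
      then have "Cor Omega Cst R2 n \<le> enat (d * (b + 2))" using C1 order_trans by fastforce
      then show ?thesis unfolding R2_def by (simp add: mult.commute)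
    qed
  qed
qed

lemma part1:
  fixes delta :: "'q::finite \<Rightarrow> 'a::finite \<Rightarrow> 'q"
    and Omega :: "'q \<Rightarrow> nat"
    and Cst :: "'q \<Rightarrow> 'a \<Rightarrow> cost"
    and r1 r2 :: "nat \<Rightarrow> ('q,'a) trans list"
    and d b :: nat
  assumes fr1: "\<forall>j. is_fin_run delta (r1 j)"
    and fr2: "\<forall>j. is_fin_run delta (r2 j)"
    and ty: "\<forall>j. run_type Omega Cst (r1 j) = run_type Omega Cst (r2 j)"
    and dl: "\<forall>j. length (r2 j) \<le> d"
    and inf: "is_inf_run delta (concat_inf r1)"
    and lim: "limsup (Cor Omega Cst (concat_inf r1)) \<le> enat b"
  shows "limsup (Cor Omega Cst (concat_inf r2)) \<le> enat ((b + 2) * d)"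
proof -
  have "limsup (Cor Omega Cst (concat_inf r1)) < enat (Suc b)" using lim by (simp add: le_less_trans)
  then have "eventually (\<lambda>m. Cor Omega Cst (concat_inf r1) m < enat (Suc b)) sequentially"
    by (rule Limsup_lessD)
  then obtain N where N: "\<forall>m\<ge>N. Cor Omega Cst (concat_inf r1) m < enat (Suc b)"
    unfolding eventually_sequentially by blast
  have ev: "\<forall>m\<ge>N. Cor Omega Cst (concat_inf r1) m \<le> enat b"
  proof (intro allI impI)
    fix m assume "N \<le> m"
    then have "Cor Omega Cst (concat_inf r1) m < enat (Suc b)" using N by blast
    then show "Cor Omega Cst (concat_inf r1) m \<le> enat b"
      by (cases "Cor Omega Cst (concat_inf r1) m") auto
  qed
  have "eventually (\<lambda>n. Cor Omega Cst (concat_inf r2) n \<le> enat ((b + 2) * d)) sequentially"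
    unfolding eventually_sequentially
    using core[OF fr1 fr2 ty dl inf ev] by blast
  then show ?thesis by (rule Limsup_bounded)
qed

theorem lemma1:
  fixes delta :: "'q::finite \<Rightarrow> 'a::finite \<Rightarrow> 'q"
    and Omega :: "'q \<Rightarrow> nat"
    and Cst :: "'q \<Rightarrow> 'a \<Rightarrow> cost"
    and r1 r2 :: "nat \<Rightarrow> ('q,'a) trans list"
    and d b :: nat
  assumes "colours_ok Omega"
    and "\<And>j. is_fin_run delta (r1 j)"
    and "\<And>j. is_fin_run delta (r2 j)"
    and "\<And>j. run_type Omega Cst (r1 j) = run_type Omega Cst (r2 j)"
    and "(SUP j. enat (length (r2 j))) = enat d"
    and "is_inf_run delta (concat_inf r1)"
  shows "(limsup (Cor Omega Cst (concat_inf r1)) \<le> enat b \<longrightarrow>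
            limsup (Cor Omega Cst (concat_inf r2)) \<le> enat ((b + 2) * d))
       \<and> (accepting Omega Cst (concat_inf r1) \<longrightarrow> accepting Omega Cst (concat_inf r2))"
proof -
  have fr1: "\<forall>j. is_fin_run delta (r1 j)" using assms(2) by blast
  have fr2: "\<forall>j. is_fin_run delta (r2 j)" using assms(3) by blast
  have ty: "\<forall>j. run_type Omega Cst (r1 j) = run_type Omega Cst (r2 j)" using assms(4) by blast
  have dl: "\<forall>j. length (r2 j) \<le> d"
  proof
    fix j
    have "enat (length (r2 j)) \<le> (SUP j. enat (length (r2 j)))" by (rule SUP_upper) simp
    then show "length (r2 j) \<le> d" using assms(5) by simp
  qed
  note P = part1[OF fr1 fr2 ty dl assms(6)]
  show ?thesis
  proof (intro conjI impI)
    assume "limsup (Cor Omega Cst (concat_inf r1)) \<le> enat b"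
    then show "limsup (Cor Omega Cst (concat_inf r2)) \<le> enat ((b + 2) * d)" by (rule P)
  next
    assume "accepting Omega Cst (concat_inf r1)"
    then obtain b' where "limsup (Cor Omega Cst (concat_inf r1)) = enat b'"
      unfolding accepting_def by (cases "limsup (Cor Omega Cst (concat_inf r1))") auto
    then have "limsup (Cor Omega Cst (concat_inf r2)) \<le> enat ((b' + 2) * d)" using P by simp
    then show "accepting Omega Cst (concat_inf r2)" unfolding accepting_def
      using le_less_trans by fastforce
  qed
qed

end
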